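(* Let $n\in\mathbb{N}$, $\alpha\in\mathbb{R}$ with $n<\alpha\le n+1$, $k\in\mathbb{N}$, $\mu\in\mathbb{R}$ with $\mu>-1$, and consider the differential operator in the Laplace variable $s$ $$\Pi^{n+1}_{k,\mu,\alpha}=\frac{1}{s^{2\alpha+k+\mu+3}}\cdot\frac{d}{ds}\cdot s^{2\alpha-n+1+k}\cdot\frac{d^{n+k+1}}{ds^{n+k+1}}\cdot s^{n+1}.$$ Then $\Pi^{n+1}_{k,\mu,\alpha}$ is an integral-annihilator for $x^{(\alpha)}(t_0)$ via the truncated fractional Taylor expansion $$x_{2\alpha-n}(t_0+t)=\sum_{j=0}^{n}\frac{t^j}{j!}x^{(j)}(t_0)+\frac{t^{\alpha}}{\Gamma(\alpha+1)}x^{(\alpha)}(t_0)+\frac{t^{2\alpha-n}}{\Gamma(2\alpha-n+1)}x^{(2\alpha-n)}(t_0),\quad t\ge0,$$ that is: (i) writing $\hat x_{2\alpha-n}(s)=\sum_{j=0}^n s^{-(j+1)}x^{(j)}(t_0)+s^{-(\alpha+1)}x^{(\alpha)}(t_0)+s^{-(2\alpha-n+1)}x^{(2\alpha-n)}(t_0)$ for its Laplace transform (in $t$), the terms involving $x^{(j)}(t_0)$, $0\le j\le n$, and $x^{(2\alpha-n)}(t_0)$ are annihilated, and for every $T>0$ $$(-1)^{n+1+k}\,\mathcal{L}^{-1}\{\Pi^{n+1}_{k,\mu,\alpha}\hat x_{2\alpha-n}\}(T)=\frac{\Gamma(\alpha+1+k)}{\Gamma(\alpha-n)}\,\frac{(\alpha-n)\,T^{n+\alpha+3+k+\mu}}{\Gamma(n+\alpha+k+\mu+4)}\,x^{(\alpha)}(t_0);$$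 (ii) after expansion by the Leibniz rule, $\Pi^{n+1}_{k,\mu,\alpha}$ is a finite linear combination of operators $s^{-\nu}\frac{d^m}{ds^m}$ with $\nu\ge\mu+1>0$, so that its action on a Laplace transform corresponds in the time domain to a Riemann–Liouville integral.
   Context: $\mathcal{L}^{-1}$ denotes the inverse Laplace transform. Here $x^{(j)}(t_0)$, $x^{(\alpha)}(t_0)$, $x^{(2\alpha-n)}(t_0)$ are arbitrary real coefficients (in the application, derivative values of a signal $x\in\mathcal{C}^n(I)$ at $t_0$, the fractional ones being Jumarie modified Riemann–Liouville derivatives $x^{(\beta)}=(x^{(n)})^{(\beta-n)}$). The time-domain meaning of $s^{-\nu}\frac{d^m}{ds^m}\hat g(s)$, $\nu>0$, is $T\mapsto\frac{1}{\Gamma(\nu)}\int_0^T(T-\tau)^{\nu-1}(-\tau)^m g(\tau)\,d\tau$. *)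

theory Defs
  imports "HOL-Analysis.Analysis"
begin

definition Pi_op :: "nat \<Rightarrow> nat \<Rightarrow> real \<Rightarrow> real \<Rightarrow> (real \<Rightarrow> real) \<Rightarrow> real \<Rightarrow> real" where
  "Pi_op n k \<mu> \<alpha> f s =
     s powr (- (2 * \<alpha> + real k + \<mu> + 3)) *
     deriv (\<lambda>u. u powr (2 * \<alpha> - real n + 1 + real k) *
                 (deriv ^^ (n + k + 1)) (\<lambda>v. v ^ (n + 1) * f v) u) s"

text \<open>Laplace transform of the truncated fractional Taylor expansion x_{2 alpha - n}(t_0 + t).
  a j = x^(j)(t_0), b = x^(alpha)(t_0), c = x^(2 alpha - n)(t_0).\<close>
definition xhat :: "nat \<Rightarrow> real \<Rightarrow> (nat \<Rightarrow> real) \<Rightarrow> real \<Rightarrow> real \<Rightarrow> real \<Rightarrow> real" where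
  "xhat n \<alpha> a b c s =
     (\<Sum>j\<le>n. s powr (- (real j + 1)) * a j) + s powr (- (\<alpha> + 1)) * b
     + s powr (- (2 * \<alpha> - real n + 1)) * c"

definition is_laplace_transform :: "(real \<Rightarrow> real) \<Rightarrow> (real \<Rightarrow> real) \<Rightarrow> bool" where
  "is_laplace_transform g F \<longleftrightarrow>
     (\<forall>s>0. ((\<lambda>T. exp (- s * T) * g T) has_integral F s) {0<..})"

definition smooth_on :: "real set \<Rightarrow> (real \<Rightarrow> real) \<Rightarrow> bool" where
  "smooth_on S f \<longleftrightarrow> (\<forall>m. \<forall>x\<in>S. (deriv ^^ m) f differentiable (at x))"

end

theory Submission
  imports Defs
begin

lemma deriv_funpow_cong:
  assumes "open S" "\<forall>x\<in>S. f x = g x"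
  shows "\<forall>x\<in>S. (deriv ^^ m) f x = (deriv ^^ m) g x"
proof (induction m)
  case 0 then show ?case using assms by simp
next
  case (Suc m)
  show ?case
  proof
    fix x assume x: "x \<in> S"
    have "eventually (\<lambda>y. y \<in> S) (nhds x)" using assms(1) x by (rule eventually_nhds_in_open)
    hence "eventually (\<lambda>y. (deriv ^^ m) f y = (deriv ^^ m) g y) (nhds x)"
      by eventually_elim (use Suc in auto)
    hence "deriv ((deriv ^^ m) f) x = deriv ((deriv ^^ m) g) x" by (rule deriv_cong_ev) simp
    thus "(deriv ^^ Suc m) f x = (deriv ^^ Suc m) g x" by simp
  qed
qed

lemma deriv_at_pos:
  assumes "x > (0::real)" "\<forall>v>0. f v = g v" "(g has_real_derivative D) (at x)"
  shows "deriv f x = D"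
proof -
  have "eventually (\<lambda>y. y \<in> {0<..}) (nhds x)" using assms(1) by (intro eventually_nhds_in_open) auto
  hence "eventually (\<lambda>y. f y = g y) (nhds x)" by eventually_elim (use assms in auto)
  hence "deriv f x = deriv g x" by (rule deriv_cong_ev) simp
  also have "\<dots> = D" using assms(3) by (rule DERIV_imp_deriv)
  finally show ?thesis .
qed

lemma deriv_powr_sum:
  fixes w q :: "'i \<Rightarrow> real"
  assumes "finite I"
  shows "\<forall>x>0. (deriv ^^ m) (\<lambda>v. \<Sum>i\<in>I. w i * v powr q i) x
          = (\<Sum>i\<in>I. w i * (\<Prod>j<m. q i - real j) * x powr (q i - real m))"
proof (induction m)
  case 0 then show ?case by simp
next
  case (Suc m)
  show ?case
  proof (intro allI impI)
    fix x :: real assume x: "x > 0"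
    have "((\<lambda>v. \<Sum>i\<in>I. w i * (\<Prod>j<m. q i - real j) * v powr (q i - real m)) has_real_derivative
           (\<Sum>i\<in>I. w i * (\<Prod>j<m. q i - real j) * ((q i - real m) * x powr (q i - real m - 1)))) (at x)"
      using x by (auto intro!: derivative_eq_intros) (simp add: mult_ac)
    hence "deriv ((deriv ^^ m) (\<lambda>v. \<Sum>i\<in>I. w i * v powr q i)) x =
           (\<Sum>i\<in>I. w i * (\<Prod>j<m. q i - real j) * ((q i - real m) * x powr (q i - real m - 1)))"
      by (intro deriv_at_pos[OF x Suc])
    thus "(deriv ^^ Suc m) (\<lambda>v. \<Sum>i\<in>I. w i * v powr q i) x
          = (\<Sum>i\<in>I. w i * (\<Prod>j<Suc m. q i - real j) * x powr (q i - real (Suc m)))"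
      by (simp add: algebra_simps diff_diff_eq)
  qed
qed

lemma Pi_op_powsum:
  fixes w \<beta> e :: "'i \<Rightarrow> real"
  assumes fin: "finite I" and s: "s > 0" and F: "\<forall>v>0. F v = (\<Sum>i\<in>I. w i * v powr (- \<beta> i))"
    and e: "\<And>i. e i = (2 * \<alpha> - real n + 1 + real k) + (real n + 1 - \<beta> i) - real (n + k + 1)"
  shows "Pi_op n k \<mu> \<alpha> F s = s powr (- (2 * \<alpha> + real k + \<mu> + 3)) *
     (\<Sum>i\<in>I. w i * (\<Prod>j<n + k + 1. (real n + 1 - \<beta> i) - real j) * e i * s powr (e i - 1))"
proof -
  let ?M = "n + k + 1"
  let ?g = "2 * \<alpha> - real n + 1 + real k"
  let ?P = "\<lambda>i. (\<Prod>j<?M. (real n + 1 - \<beta> i) - real j)"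
  have eq1: "\<forall>v\<in>{0<..}. v ^ (n + 1) * F v = (\<Sum>i\<in>I. w i * v powr (real n + 1 - \<beta> i))"
  proof
    fix v :: real assume "v \<in> {0<..}"
    hence v: "v > 0" by simp
    have vp: "v powr (real n + 1) = v ^ (n+1)" using powr_realpow[OF v, of "n+1"] by (simp add: add.commute)
    have "v ^ (n + 1) * F v = (\<Sum>i\<in>I. w i * (v powr (real n + 1) * v powr (- \<beta> i)))"
      using F v unfolding vp by (simp add: sum_distrib_left mult_ac)
    also have "\<dots> = (\<Sum>i\<in>I. w i * v powr (real n + 1 - \<beta> i))"
      by (simp add: powr_add[symmetric])
    finally show "v ^ (n + 1) * F v = (\<Sum>i\<in>I. w i * v powr (real n + 1 - \<beta> i))" .
  qed
  have D: "\<forall>u>0. (deriv ^^ ?M) (\<lambda>v. v ^ (n + 1) * F v) u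
           = (\<Sum>i\<in>I. w i * ?P i * u powr (real n + 1 - \<beta> i - real ?M))"
    using deriv_funpow_cong[OF _ eq1, of ?M] deriv_powr_sum[OF fin, of ?M w "\<lambda>i. real n + 1 - \<beta> i"]
    by simp
  have eq2: "\<forall>u>0. u powr ?g * (deriv ^^ ?M) (\<lambda>v. v ^ (n + 1) * F v) u
           = (\<Sum>i\<in>I. w i * ?P i * u powr (e i))"
  proof (intro allI impI)
    fix u :: real assume u: "u > 0"
    have "u powr ?g * (deriv ^^ ?M) (\<lambda>v. v ^ (n + 1) * F v) u
        = (\<Sum>i\<in>I. w i * ?P i * (u powr ?g * u powr (real n + 1 - \<beta> i - real ?M)))"
      using D u by (simp add: sum_distrib_left mult_ac)
    also have "\<dots> = (\<Sum>i\<in>I. w i * ?P i * u powr (e i))"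
      by (simp add: powr_add[symmetric] e algebra_simps)
    finally show "u powr ?g * (deriv ^^ ?M) (\<lambda>v. v ^ (n + 1) * F v) u
           = (\<Sum>i\<in>I. w i * ?P i * u powr (e i))" .
  qed
  have "((\<lambda>u. \<Sum>i\<in>I. w i * ?P i * u powr (e i)) has_real_derivative
          (\<Sum>i\<in>I. w i * ?P i * (e i * s powr (e i - 1)))) (at s)"
    using s by (intro DERIV_sum) (auto intro!: derivative_eq_intros)
  hence "deriv (\<lambda>u. u powr ?g * (deriv ^^ ?M) (\<lambda>v. v ^ (n + 1) * F v) u) s
        = (\<Sum>i\<in>I. w i * ?P i * (e i * s powr (e i - 1)))"
    by (intro deriv_at_pos[OF s eq2])
  thus ?thesis unfolding Pi_op_def by (simp add: mult_ac)
qed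

lemma laplace_powr:
  fixes p s :: real
  assumes p: "p > -1" and s: "s > 0"
  shows "((\<lambda>T. exp (- s * T) * T powr p) has_integral Gamma (p + 1) / s powr (p + 1)) {0<..}"
proof -
  let ?f = "\<lambda>t::real. t powr p / exp t"
  have "(?f has_integral Gamma (p + 1)) {0..}"
    using Gamma_integral_real[of "p + 1"] p by simp
  hence "((\<lambda>t. if t \<in> {0<..} then ?f t else 0) has_integral Gamma (p + 1)) {0..}"
    by (rule has_integral_spike [of "{0}", rotated 2]) auto
  hence G: "(?f has_integral Gamma (p + 1)) {0<..}"
    by (subst (asm) has_integral_restrict) auto
  hence A: "?f absolutely_integrable_on {0<..}"
    by (intro nonnegative_absolutely_integrable_1) (auto simp: has_integral_integrable)
  have I: "integral {0<..} ?f = Gamma (p + 1)" using G by (rule integral_unique)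
  have img: "(\<lambda>x. s * x) ` {0<..} = {0<..}"
  proof
    show "{0<..} \<subseteq> (\<lambda>x. s * x) ` {0<..}"
    proof
      fix y :: real assume "y \<in> {0<..}"
      thus "y \<in> (\<lambda>x. s * x) ` {0<..}" using s by (intro image_eqI[of _ _ "y / s"]) auto
    qed
  qed (use s in auto)
  have "(\<lambda>x. \<bar>s\<bar> * ?f (s * x)) absolutely_integrable_on {0<..} \<and>
        integral {0<..} (\<lambda>x. \<bar>s\<bar> * ?f (s * x)) = Gamma (p + 1)"
  proof -
    have inj: "inj_on (\<lambda>x. s * x) {0<..}" using s by (auto intro: inj_onI)
    have der: "\<And>x. x \<in> {0<..} \<Longrightarrow> ((\<lambda>x. s * x) has_field_derivative s) (at x within {0<..})"
      by (auto intro!: derivative_eq_intros)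
    show ?thesis
      using has_absolute_integral_change_of_variables_1'[of "{0<..}" "\<lambda>x. s * x" "\<lambda>_. s" ?f "Gamma (p + 1)", OF _ der inj]
      A I img by simp
  qed
  hence "((\<lambda>x. \<bar>s\<bar> * ?f (s * x)) has_integral Gamma (p + 1)) {0<..}"
    using integrable_integral absolutely_integrable_on_def by metis
  hence "((\<lambda>x. inverse (s powr (p + 1)) * (\<bar>s\<bar> * ?f (s * x))) has_integral
          inverse (s powr (p + 1)) * Gamma (p + 1)) {0<..}"
    by (rule has_integral_mult_right)
  also have "?this \<longleftrightarrow> ((\<lambda>T. exp (- s * T) * T powr p) has_integral
          inverse (s powr (p + 1)) * Gamma (p + 1)) {0<..}"
  proof (rule has_integral_cong)
    fix x :: real assume "x \<in> {0<..}"
    hence x: "x > 0" by simp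
    have "inverse (s powr (p + 1)) * (\<bar>s\<bar> * ?f (s * x))
        = (s / s powr (p + 1) * s powr p) * x powr p / exp (s * x)"
      using s x by (simp add: powr_mult field_simps)
    also have "s / s powr (p + 1) * s powr p = 1"
      using s by (simp add: powr_add field_simps)
    finally show "inverse (s powr (p + 1)) * (\<bar>s\<bar> * ?f (s * x)) = exp (- s * x) * x powr p"
      by (simp add: exp_minus field_simps)
  qed
  finally show ?thesis by (simp add: field_simps)
qed

definition Dl :: "(real \<times> real \<times> nat) list \<Rightarrow> (real \<times> real \<times> nat) list" where
  "Dl L = concat (map (\<lambda>(c, r, d). [(c * r, r - 1, d), (c, r, Suc d)]) L)"

definition evl :: "(real \<times> real \<times> nat) list \<Rightarrow> (real \<Rightarrow> real) \<Rightarrow> real \<Rightarrow> real" where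
  "evl L f x = (\<Sum>(c, r, d)\<leftarrow>L. c * x powr r * (deriv ^^ d) f x)"

lemma evl_Nil [simp]: "evl [] f x = 0" by (simp add: evl_def)
lemma evl_Cons [simp]: "evl ((c, r, d) # L) f x = c * x powr r * (deriv ^^ d) f x + evl L f x"
  by (simp add: evl_def)
lemma Dl_Nil [simp]: "Dl [] = []" by (simp add: Dl_def)
lemma Dl_Cons [simp]: "Dl ((c, r, d) # L) = (c * r, r - 1, d) # (c, r, Suc d) # Dl L"
  by (simp add: Dl_def)

lemma smooth_deriv:
  assumes "smooth_on {0<..} f" "x > 0"
  shows "((deriv ^^ d) f has_real_derivative (deriv ^^ Suc d) f x) (at x)"
proof -
  have "(deriv ^^ d) f differentiable (at x)" using assms unfolding smooth_on_def by auto
  hence "((deriv ^^ d) f has_real_derivative deriv ((deriv ^^ d) f) x) (at x)"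
    by (simp add: DERIV_deriv_iff_real_differentiable)
  thus ?thesis by simp
qed

lemma evl_deriv:
  assumes f: "smooth_on {0<..} f" and x: "x > 0"
  shows "((\<lambda>x. evl L f x) has_real_derivative evl (Dl L) f x) (at x)"
proof (induction L)
  case Nil then show ?case by simp
next
  case (Cons a L)
  obtain c r d where a: "a = (c, r, d)" by (cases a)
  have "((\<lambda>x. c * x powr r * (deriv ^^ d) f x + evl L f x) has_real_derivative
     c * (r * x powr (r - 1)) * (deriv ^^ d) f x + c * x powr r * (deriv ^^ Suc d) f x + evl (Dl L) f x) (at x)"
    using x by (auto intro!: derivative_eq_intros smooth_deriv[OF f x] Cons)
  thus ?case unfolding a by (simp add: algebra_simps)
qed

lemma Dl_bound: "\<forall>(c, r, d)\<in>set L. r \<le> B \<Longrightarrow> \<forall>(c, r, d)\<in>set (Dl L). r \<le> B"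
  by (induction L) auto

lemma Dl_iter_bound: "\<forall>(c, r, d)\<in>set ((Dl ^^ m) [(1, real n + 1, 0)]). r \<le> real n + 1"
proof (induction m)
  case (Suc m)
  show ?case using Dl_bound[OF Suc] by simp
qed simp

lemma deriv_iter_evl:
  assumes f: "smooth_on {0<..} f"
  shows "\<forall>x>0. (deriv ^^ m) (\<lambda>v. v ^ (n + 1) * f v) x = evl ((Dl ^^ m) [(1, real n + 1, 0)]) f x"
proof (induction m)
  case 0
  show ?case
  proof (intro allI impI)
    fix x :: real assume x: "x > 0"
    have "x powr (real n + 1) = x ^ (n+1)" using powr_realpow[OF x, of "n+1"] by (simp add: add.commute)
    thus "(deriv ^^ 0) (\<lambda>v. v ^ (n + 1) * f v) x = evl ((Dl ^^ 0) [(1, real n + 1, 0)]) f x"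
      by simp
  qed
next
  case (Suc m)
  show ?case
  proof (intro allI impI)
    fix x :: real assume x: "x > 0"
    have "deriv ((deriv ^^ m) (\<lambda>v. v ^ (n + 1) * f v)) x = evl (Dl ((Dl ^^ m) [(1, real n + 1, 0)])) f x"
      by (rule deriv_at_pos[OF x Suc evl_deriv[OF f x]])
    thus "(deriv ^^ Suc m) (\<lambda>v. v ^ (n + 1) * f v) x = evl ((Dl ^^ Suc m) [(1, real n + 1, 0)]) f x"
      by simp
  qed
qed

lemma sum_map_evl:
  assumes s: "s > 0"
  shows "(\<Sum>(c, \<nu>, m)\<leftarrow>map (\<lambda>(c, r, d). (c * K, B - r, d)) L. c * s powr (- \<nu>) * (deriv ^^ m) f s)
        = K * s powr (- B) * evl L f s"
proof (induction L)
  case Nil then show ?case by simp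
next
  case (Cons a L)
  obtain c r d where a: "a = (c, r, d)" by (cases a)
  have "s powr (- (B - r)) = s powr (- B) * s powr r" by (simp add: powr_add[symmetric])
  with Cons show ?case unfolding a by (simp add: algebra_simps)
qed

lemma part4:
  fixes n k :: nat and \<alpha> \<mu> :: real
  assumes "\<mu> > -1"
  shows "\<exists>cs :: (real \<times> real \<times> nat) list.
        (\<forall>(c, \<nu>, m) \<in> set cs. \<nu> \<ge> \<mu> + 1 \<and> \<nu> > 0) \<and>
        (\<forall>f. smooth_on {0<..} f \<longrightarrow>
           (\<forall>s>0. Pi_op n k \<mu> \<alpha> f s =
                  (\<Sum>(c, \<nu>, m) \<leftarrow> cs. c * s powr (- \<nu>) * (deriv ^^ m) f s)))"
proof -
  define A where "A = 2 * \<alpha> + real k + \<mu> + 3"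
  define g where "g = 2 * \<alpha> - real n + 1 + real k"
  define L where "L = (Dl ^^ (n + k + 1)) [(1, real n + 1, 0)]"
  define cs where "cs = map (\<lambda>(c, r, d). (c * g, A - g + 1 - r, d)) L @ map (\<lambda>(c, r, d). (c * 1, A - g - r, d)) (Dl L)"
  have Ag: "A - g = real n + \<mu> + 2" unfolding A_def g_def by simp
  have b1: "\<forall>(c, r, d)\<in>set L. r \<le> real n + 1" unfolding L_def by (rule Dl_iter_bound)
  have b2: "\<forall>(c, r, d)\<in>set (Dl L). r \<le> real n + 1" by (rule Dl_bound[OF b1])
  have "\<forall>(c, \<nu>, m) \<in> set cs. \<nu> \<ge> \<mu> + 1 \<and> \<nu> > 0"
    using b1 b2 assms unfolding cs_def by (auto simp: Ag)
  moreover have "\<forall>f. smooth_on {0<..} f \<longrightarrow>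
           (\<forall>s>0. Pi_op n k \<mu> \<alpha> f s = (\<Sum>(c, \<nu>, m) \<leftarrow> cs. c * s powr (- \<nu>) * (deriv ^^ m) f s))"
  proof (intro allI impI)
    fix f :: "real \<Rightarrow> real" and s :: real
    assume f: "smooth_on {0<..} f" and s: "s > 0"
    have eq: "\<forall>u>0. u powr g * (deriv ^^ (n + k + 1)) (\<lambda>v. v ^ (n + 1) * f v) u = u powr g * evl L f u"
      using deriv_iter_evl[OF f, of "n + k + 1" n] unfolding L_def by simp
    have "((\<lambda>u. u powr g * evl L f u) has_real_derivative
           g * s powr (g - 1) * evl L f s + s powr g * evl (Dl L) f s) (at s)"
      using s by (auto intro!: derivative_eq_intros evl_deriv[OF f s])
    hence d: "deriv (\<lambda>u. u powr g * (deriv ^^ (n + k + 1)) (\<lambda>v. v ^ (n + 1) * f v) u) s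
           = g * s powr (g - 1) * evl L f s + s powr g * evl (Dl L) f s"
      by (rule deriv_at_pos[OF s eq])
    have p1: "s powr (- A) * s powr (g - 1) = s powr (- (A - g + 1))"
      by (simp add: powr_add[symmetric] algebra_simps)
    have p2: "s powr (- A) * s powr g = s powr (- (A - g))"
      by (simp add: powr_add[symmetric])
    have "Pi_op n k \<mu> \<alpha> f s = s powr (- A) * (g * s powr (g - 1) * evl L f s + s powr g * evl (Dl L) f s)"
      unfolding Pi_op_def A_def[symmetric] g_def[symmetric] d ..
    also have "\<dots> = g * (s powr (- A) * s powr (g - 1)) * evl L f s + 1 * (s powr (- A) * s powr g) * evl (Dl L) f s"
      by (simp add: algebra_simps)
    also have "\<dots> = g * s powr (- (A - g + 1)) * evl L f s + 1 * s powr (- (A - g)) * evl (Dl L) f s"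
      unfolding p1 p2 ..
    also have "\<dots> = (\<Sum>(c, \<nu>, m) \<leftarrow> cs. c * s powr (- \<nu>) * (deriv ^^ m) f s)"
      unfolding cs_def sum_list_append map_append sum_map_evl[OF s] by simp
    finally show "Pi_op n k \<mu> \<alpha> f s = (\<Sum>(c, \<nu>, m) \<leftarrow> cs. c * s powr (- \<nu>) * (deriv ^^ m) f s)" .
  qed
  ultimately show ?thesis by blast
qed

lemma prod_zero_j:
  assumes "j \<le> n"
  shows "(\<Prod>i<n + k + 1. real n + 1 - (real j + 1) - real i) = 0"
proof (rule prod_zero)
  show "\<exists>a\<in>{..<n + k + 1}. real n + 1 - (real j + 1) - real a = 0"
    using assms by (intro bexI[of _ "n - j"]) (auto simp: of_nat_diff)
qed simp

lemma prod_gamma: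
  assumes "real n < \<alpha>"
  shows "(\<Prod>j<n + k + 1. real n + 1 - (\<alpha> + 1) - real j)
         = (-1) ^ (n + k + 1) * (Gamma (\<alpha> + 1 + real k) / Gamma (\<alpha> - real n))"
proof -
  have "(\<Prod>j<n + k + 1. real n + 1 - (\<alpha> + 1) - real j) = (\<Prod>j<n + k + 1. (-1) * ((\<alpha> - real n) + real j))"
    by (rule prod.cong) (auto simp: algebra_simps)
  also have "\<dots> = (-1) ^ (n + k + 1) * pochhammer (\<alpha> - real n) (n + k + 1)"
    by (simp only: prod.distrib prod_constant card_lessThan pochhammer_prod lessThan_atLeast0) simp
  also have "pochhammer (\<alpha> - real n) (n + k + 1) = Gamma (\<alpha> - real n + real (n + k + 1)) / Gamma (\<alpha> - real n)"
    using assms by (intro pochhammer_Gamma) (auto dest: nonpos_Ints_nonpos)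
  also have "\<alpha> - real n + real (n + k + 1) = \<alpha> + 1 + real k" by simp
  finally show ?thesis .
qed

theorem proposition2:
  fixes n k :: nat and \<alpha> \<mu> :: real
  assumes "real n < \<alpha>" and "\<alpha> \<le> real n + 1" and "\<mu> > -1"
  shows
    "(\<forall>j\<le>n. \<forall>s>0. Pi_op n k \<mu> \<alpha> (\<lambda>s. s powr (- (real j + 1))) s = 0)
   \<and> (\<forall>s>0. Pi_op n k \<mu> \<alpha> (\<lambda>s. s powr (- (2 * \<alpha> - real n + 1))) s = 0)
   \<and> (\<forall>(a :: nat \<Rightarrow> real) (b :: real) (c :: real).
        is_laplace_transform
          (\<lambda>T. (-1) ^ (n + 1 + k) *
               (Gamma (\<alpha> + 1 + real k) / Gamma (\<alpha> - real n)) *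
               ((\<alpha> - real n) * T powr (real n + \<alpha> + 3 + real k + \<mu>)
                  / Gamma (real n + \<alpha> + real k + \<mu> + 4)) * b)
          (Pi_op n k \<mu> \<alpha> (xhat n \<alpha> a b c)))
   \<and> (\<exists>cs :: (real \<times> real \<times> nat) list.
        (\<forall>(c, \<nu>, m) \<in> set cs. \<nu> \<ge> \<mu> + 1 \<and> \<nu> > 0) \<and>
        (\<forall>f. smooth_on {0<..} f \<longrightarrow>
           (\<forall>s>0. Pi_op n k \<mu> \<alpha> f s =
                  (\<Sum>(c, \<nu>, m) \<leftarrow> cs. c * s powr (- \<nu>) * (deriv ^^ m) f s))))"
proof (intro conjI)
  define E where "E = (\<lambda>\<beta>. (2 * \<alpha> - real n + 1 + real k) + (real n + 1 - \<beta>) - real (n + k + 1))"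
  define P where "P = (\<lambda>\<beta>. \<Prod>j<n + k + 1. (real n + 1 - \<beta>) - real j)"
  define A where "A = 2 * \<alpha> + real k + \<mu> + 3"
  have single: "Pi_op n k \<mu> \<alpha> (\<lambda>s. s powr (- \<beta>)) s = s powr (- A) * (P \<beta> * E \<beta> * s powr (E \<beta> - 1))"
    if s: "s > 0" for \<beta> s
    using Pi_op_powsum[of "{0::nat}" s "\<lambda>s. s powr (- \<beta>)" "\<lambda>_. 1" "\<lambda>_. \<beta>" "\<lambda>_. E \<beta>" \<alpha> n k \<mu>] s
    by (simp add: E_def P_def A_def)
  show "\<forall>j\<le>n. \<forall>s>0. Pi_op n k \<mu> \<alpha> (\<lambda>s. s powr (- (real j + 1))) s = 0"
  proof (intro allI impI)
    fix j :: nat and s :: real assume j: "j \<le> n" and s: "s > 0"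
    have "P (real j + 1) = 0" unfolding P_def by (rule prod_zero_j[OF j])
    thus "Pi_op n k \<mu> \<alpha> (\<lambda>s. s powr (- (real j + 1))) s = 0"
      using single[OF s, of "real j + 1"] by simp
  qed
  show "\<forall>s>0. Pi_op n k \<mu> \<alpha> (\<lambda>s. s powr (- (2 * \<alpha> - real n + 1))) s = 0"
  proof (intro allI impI)
    fix s :: real assume s: "s > 0"
    have "E (2 * \<alpha> - real n + 1) = 0" unfolding E_def by simp
    thus "Pi_op n k \<mu> \<alpha> (\<lambda>s. s powr (- (2 * \<alpha> - real n + 1))) s = 0"
      using single[OF s, of "2 * \<alpha> - real n + 1"] by simp
  qed
  show "\<exists>cs :: (real \<times> real \<times> nat) list.
        (\<forall>(c, \<nu>, m) \<in> set cs. \<nu> \<ge> \<mu> + 1 \<and> \<nu> > 0) \<and>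
        (\<forall>f. smooth_on {0<..} f \<longrightarrow>
           (\<forall>s>0. Pi_op n k \<mu> \<alpha> f s =
                  (\<Sum>(c, \<nu>, m) \<leftarrow> cs. c * s powr (- \<nu>) * (deriv ^^ m) f s)))"
    by (rule part4[OF assms(3)])
  show "\<forall>(a :: nat \<Rightarrow> real) (b :: real) (c :: real).
        is_laplace_transform
          (\<lambda>T. (-1) ^ (n + 1 + k) *
               (Gamma (\<alpha> + 1 + real k) / Gamma (\<alpha> - real n)) *
               ((\<alpha> - real n) * T powr (real n + \<alpha> + 3 + real k + \<mu>)
                  / Gamma (real n + \<alpha> + real k + \<mu> + 4)) * b)
          (Pi_op n k \<mu> \<alpha> (xhat n \<alpha> a b c))"
  proof (intro allI)
    fix a :: "nat \<Rightarrow> real" and b c :: real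
    define w where "w = (\<lambda>i. if i \<le> n then a i else if i = n + 1 then b else c)"
    define \<beta> where "\<beta> = (\<lambda>i. if i \<le> n then real i + 1 else if i = n + 1 then \<alpha> + 1 else 2 * \<alpha> - real n + 1)"
    define p where "p = real n + \<alpha> + 3 + real k + \<mu>"
    define K where "K = (-1) ^ (n + 1 + k) * (Gamma (\<alpha> + 1 + real k) / Gamma (\<alpha> - real n)) *
                        ((\<alpha> - real n) / Gamma (p + 1)) * b"
    have p1: "p + 1 > 0" using assms by (simp add: p_def)
    have xh: "\<forall>v>0. xhat n \<alpha> a b c v = (\<Sum>i\<in>{..Suc (Suc n)}. w i * v powr (- \<beta> i))"
    proof (intro allI impI)
      fix v :: real assume v: "v > 0"
      have "(\<Sum>i\<le>n. w i * v powr (- \<beta> i)) = (\<Sum>j\<le>n. v powr (- (real j + 1)) * a j)"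
        by (rule sum.cong) (auto simp: w_def \<beta>_def)
      thus "xhat n \<alpha> a b c v = (\<Sum>i\<in>{..Suc (Suc n)}. w i * v powr (- \<beta> i))"
        by (simp add: xhat_def w_def \<beta>_def)
    qed
    show "is_laplace_transform
          (\<lambda>T. (-1) ^ (n + 1 + k) *
               (Gamma (\<alpha> + 1 + real k) / Gamma (\<alpha> - real n)) *
               ((\<alpha> - real n) * T powr (real n + \<alpha> + 3 + real k + \<mu>)
                  / Gamma (real n + \<alpha> + real k + \<mu> + 4)) * b)
          (Pi_op n k \<mu> \<alpha> (xhat n \<alpha> a b c))"
      unfolding is_laplace_transform_def
    proof (intro allI impI)
      fix s :: real assume s: "s > 0"
      have "Pi_op n k \<mu> \<alpha> (xhat n \<alpha> a b c) s = s powr (- A) *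
          (\<Sum>i\<in>{..Suc (Suc n)}. w i * P (\<beta> i) * E (\<beta> i) * s powr (E (\<beta> i) - 1))"
        using Pi_op_powsum[of "{..Suc (Suc n)}" s "xhat n \<alpha> a b c" w \<beta> "\<lambda>i. E (\<beta> i)" \<alpha> n k \<mu>] s xh
        by (simp add: E_def P_def A_def)
      also have "(\<Sum>i\<in>{..Suc (Suc n)}. w i * P (\<beta> i) * E (\<beta> i) * s powr (E (\<beta> i) - 1))
            = b * P (\<alpha> + 1) * (\<alpha> - real n) * s powr (\<alpha> - real n - 1)"
      proof -
        define T where "T = (\<lambda>i. w i * P (\<beta> i) * E (\<beta> i) * s powr (E (\<beta> i) - 1))"
        have Z: "(\<Sum>i\<le>n. T i) = 0"
        proof (rule sum.neutral, intro ballI)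
          fix i assume "i \<in> {..n}"
          hence i: "i \<le> n" by simp
          have "P (\<beta> i) = 0" using prod_zero_j[OF i, of k] i by (simp add: P_def \<beta>_def)
          thus "T i = 0" by (simp add: T_def)
        qed
        have T1: "T (Suc n) = b * P (\<alpha> + 1) * (\<alpha> - real n) * s powr (\<alpha> - real n - 1)"
          by (simp add: T_def w_def \<beta>_def E_def algebra_simps)
        have T2: "T (Suc (Suc n)) = 0" by (simp add: T_def E_def \<beta>_def)
        have "(\<Sum>i\<in>{..Suc (Suc n)}. T i) = (\<Sum>i\<le>n. T i) + T (Suc n) + T (Suc (Suc n))"
          by (simp only: sum.atMost_Suc)
        hence "(\<Sum>i\<in>{..Suc (Suc n)}. T i) = b * P (\<alpha> + 1) * (\<alpha> - real n) * s powr (\<alpha> - real n - 1)"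
          unfolding Z T1 T2 by simp
        thus ?thesis by (simp only: T_def)
      qed
      finally have Pv: "Pi_op n k \<mu> \<alpha> (xhat n \<alpha> a b c) s
          = s powr (- A) * (b * P (\<alpha> + 1) * (\<alpha> - real n) * s powr (\<alpha> - real n - 1))" .
      have "((\<lambda>T. K * (exp (- s * T) * T powr p)) has_integral K * (Gamma (p + 1) / s powr (p + 1))) {0<..}"
        by (rule has_integral_mult_right[OF laplace_powr]) (use assms s in \<open>auto simp: p_def\<close>)
      moreover have "K * (Gamma (p + 1) / s powr (p + 1)) = Pi_op n k \<mu> \<alpha> (xhat n \<alpha> a b c) s"
      proof -
        have G: "Gamma (p + 1) \<noteq> 0" using Gamma_real_pos[OF p1] by simp
        have sp: "s powr (- A) * s powr (\<alpha> - real n - 1) = inverse (s powr (p + 1))"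
          by (simp add: powr_add[symmetric] powr_minus[symmetric] A_def p_def algebra_simps)
        have PP: "P (\<alpha> + 1) = (-1) ^ (n + k + 1) * (Gamma (\<alpha> + 1 + real k) / Gamma (\<alpha> - real n))"
          unfolding P_def by (rule prod_gamma[OF assms(1)])
        define Q where "Q = (-1) ^ (n + k + 1) * (Gamma (\<alpha> + 1 + real k) / Gamma (\<alpha> - real n))"
        have e1: "(n + 1 + k) = n + k + 1" by simp
        have "K * (Gamma (p + 1) / s powr (p + 1)) = Q * (\<alpha> - real n) * b * inverse (s powr (p + 1))"
        proof -
          have "Gamma (\<alpha> - real n) > 0" using assms(1) by (intro Gamma_real_pos) simp
          moreover have "s powr (p + 1) > 0" using s by simp
          ultimately show ?thesis unfolding K_def Q_def e1 using G by (simp add: field_simps)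
        qed
        also have "\<dots> = s powr (- A) * (b * Q * (\<alpha> - real n) * s powr (\<alpha> - real n - 1))"
          unfolding sp[symmetric] by (simp add: mult_ac)
        finally show ?thesis unfolding Pv PP Q_def .
      qed
      moreover have "(\<lambda>T. K * (exp (- s * T) * T powr p)) = (\<lambda>T. exp (- s * T) *
             ((-1) ^ (n + 1 + k) *
               (Gamma (\<alpha> + 1 + real k) / Gamma (\<alpha> - real n)) *
               ((\<alpha> - real n) * T powr (real n + \<alpha> + 3 + real k + \<mu>)
                  / Gamma (real n + \<alpha> + real k + \<mu> + 4)) * b))"
      proof -
        have pe: "real n + \<alpha> + real k + \<mu> + 4 = p + 1" by (simp add: p_def)
        show ?thesis unfolding pe p_def[symmetric] K_def by (simp add: field_simps)
      qed
      ultimately show "((\<lambda>T. exp (- s * T) *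
             ((-1) ^ (n + 1 + k) *
               (Gamma (\<alpha> + 1 + real k) / Gamma (\<alpha> - real n)) *
               ((\<alpha> - real n) * T powr (real n + \<alpha> + 3 + real k + \<mu>)
                  / Gamma (real n + \<alpha> + real k + \<mu> + 4)) * b)) has_integral
             Pi_op n k \<mu> \<alpha> (xhat n \<alpha> a b c) s) {0<..}"
        by simp
    qed
  qed
qed

end
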